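(* Let $\mathcal{V}$ be a finite set with $|\mathcal{V}|\ge 2$, and for a logit vector $\boldsymbol{z}\in\mathbb{R}^{|\mathcal{V}|}$ let $\pi_{\boldsymbol{z}}(a)=\frac{\exp z_a}{\sum_{a'\in\mathcal{V}}\exp z_{a'}}$. (i) For any fixed target action $a\in\mathcal{V}$, the SFT loss $\mathcal{L}_{\text{SFT}}(\boldsymbol{z})=-\log\pi_{\boldsymbol{z}}(a)$ is a convex function of $\boldsymbol{z}\in\mathbb{R}^{|\mathcal{V}|}$ (its Hessian in $\boldsymbol{z}$ is positive semi-definite everywhere). (ii) Fix a sampled action $a\in\mathcal{V}$, a behavioral probability $\pi_{\text{old}}(a)\in(0,1]$, an advantage value $A\neq 0$ and a clip range $\epsilon\in(0,1)$. Let $r(\boldsymbol{z})=\pi_{\boldsymbol{z}}(a)/\pi_{\text{old}}(a)$ and $$\mathcal{L}_{\text{PPO}}(\boldsymbol{z})=-\min\bigl(r(\boldsymbol{z})A,\ \mathrm{clip}(r(\boldsymbol{z}),1-\epsilon,1+\epsilon)A\bigr),$$ where $\mathrm{clip}(x,l,u)=\min(\max(x,l),u)$. Then $\mathcal{L}_{\text{PPO}}$ is not a convex function of $\boldsymbol{z}$: its Hessian with respect to $\boldsymbol{z}$ fails to be positive semi-definite at some points where it is twice differentiable.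
   Context: A loss taking logits $\boldsymbol{z}$ as input is called logits convex if its Hessian with respect to $\boldsymbol{z}$ is positive semi-definite. The losses here are the single-time-step versions of the SFT negative log-likelihood and the PPO clipped surrogate objective. *)

theory Defs
  imports "HOL-Analysis.Analysis"
begin

definition softmax :: "real^'v \<Rightarrow> 'v::finite \<Rightarrow> real" where
  "softmax z a = exp (z $ a) / (\<Sum>b\<in>UNIV. exp (z $ b))"

definition clip :: "real \<Rightarrow> real \<Rightarrow> real \<Rightarrow> real" where
  "clip x l u = min (max x l) u"

definition sft_loss :: "'v::finite \<Rightarrow> real^'v \<Rightarrow> real" where
  "sft_loss a z = - ln (softmax z a)"

text \<open>Single-step PPO clipped loss: sampled action a, old probability p0,
  advantage A, clip range eps.\<close>
definition ppo_loss :: "'v::finite \<Rightarrow> real \<Rightarrow> real \<Rightarrow> real \<Rightarrow> real^'v \<Rightarrow> real" where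
  "ppo_loss a p0 A eps z =
     (let r = softmax z a / p0 in - min (r * A) (clip r (1 - eps) (1 + eps) * A))"

definition has_hessian :: "(real^'n \<Rightarrow> real) \<Rightarrow> real^'n^'n \<Rightarrow> real^'n \<Rightarrow> bool" where
  "has_hessian f H z \<longleftrightarrow>
     (\<exists>S g. open S \<and> z \<in> S \<and> (\<forall>x\<in>S. (f has_derivative (\<lambda>h. g x \<bullet> h)) (at x))
        \<and> (g has_derivative (\<lambda>h. H *v h)) (at z))"

definition psd :: "real^'n^'n \<Rightarrow> bool" where
  "psd H \<longleftrightarrow> (\<forall>v. 0 \<le> v \<bullet> (H *v v))"

end

theory Submission
  imports Defs
begin


lemma tangent_vec:
  fixes f :: "real^'n \<Rightarrow> real"
  assumes cv: "convex_on UNIV f" and d: "(f has_derivative (\<lambda>h. gx \<bullet> h)) (at x)"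
  shows "f y \<ge> f x + gx \<bullet> (y - x)"
proof -
  define \<theta> where "\<theta> = (\<lambda>t::real. f (x + t *\<^sub>R (y - x)))"
  have c1: "convex_on UNIV \<theta>"
  proof (rule convex_onI)
    fix t u v :: real assume "0 < t" "t < 1"
    have e: "x + ((1 - t) *\<^sub>R u + t *\<^sub>R v) *\<^sub>R (y - x)
        = (1 - t) *\<^sub>R (x + u *\<^sub>R (y - x)) + t *\<^sub>R (x + v *\<^sub>R (y - x))"
      by (simp add: algebra_simps)
    show "\<theta> ((1 - t) *\<^sub>R u + t *\<^sub>R v) \<le> (1 - t) * \<theta> u + t * \<theta> v"
      unfolding \<theta>_def e using \<open>0 < t\<close> \<open>t < 1\<close>
      by (intro convex_onD[OF cv]) auto
  qed simp
  have l: "((\<lambda>t::real. x + t *\<^sub>R (y - x)) has_derivative (\<lambda>s. s *\<^sub>R (y - x))) (at 0)"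
    by (auto intro!: derivative_eq_intros)
  have "((\<lambda>t. f (x + t *\<^sub>R (y - x))) has_derivative (\<lambda>s. gx \<bullet> (s *\<^sub>R (y - x)))) (at 0)"
    by (rule has_derivative_compose[OF l]) (simp add: d)
  hence "(\<theta> has_field_derivative (gx \<bullet> (y - x))) (at 0)"
    unfolding has_field_derivative_def \<theta>_def
    by (rule has_derivative_eq_rhs) (auto simp: fun_eq_iff)
  hence "\<theta> 1 - \<theta> 0 \<ge> (gx \<bullet> (y - x)) * (1 - 0)"
    by (intro convex_on_imp_above_tangent[OF c1]) auto
  thus ?thesis unfolding \<theta>_def by simp
qed

lemma convex_hessian_psd:
  fixes f :: "real^'n \<Rightarrow> real"
  assumes cv: "convex_on UNIV f" and hh: "has_hessian f H z"
  shows "psd H"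
  unfolding psd_def
proof
  fix v :: "real^'n"
  obtain S g where S: "open S" "z \<in> S" and dS: "\<forall>x\<in>S. (f has_derivative (\<lambda>h. g x \<bullet> h)) (at x)"
    and dg: "(g has_derivative (\<lambda>h. H *v h)) (at z)"
    using hh unfolding has_hessian_def by blast
  have mono: "(g x - g y) \<bullet> (x - y) \<ge> 0" if "x \<in> S" "y \<in> S" for x y
  proof -
    have "f y \<ge> f x + g x \<bullet> (y - x)" using tangent_vec[OF cv] dS that by blast
    moreover have "f x \<ge> f y + g y \<bullet> (x - y)" using tangent_vec[OF cv] dS that by blast
    ultimately show ?thesis by (simp add: algebra_simps inner_diff_left inner_diff_right)
  qed
  define \<psi> where "\<psi> = (\<lambda>t::real. g (z + t *\<^sub>R v) \<bullet> v)"
  have l: "((\<lambda>t::real. z + t *\<^sub>R v) has_derivative (\<lambda>s. s *\<^sub>R v)) (at 0)"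
    by (auto intro!: derivative_eq_intros)
  have "((\<lambda>t. g (z + t *\<^sub>R v)) has_derivative (\<lambda>s. H *v (s *\<^sub>R v))) (at 0)"
    by (rule has_derivative_compose[OF l]) (simp add: dg)
  hence "((\<lambda>t. g (z + t *\<^sub>R v) \<bullet> v) has_derivative (\<lambda>s. (H *v (s *\<^sub>R v)) \<bullet> v)) (at 0)"
    by (rule has_derivative_inner_left)
  hence dpsi: "(\<psi> has_field_derivative ((H *v v) \<bullet> v)) (at 0)"
    unfolding has_field_derivative_def \<psi>_def
    by (rule has_derivative_eq_rhs) (auto simp: fun_eq_iff matrix_vector_mult_scaleR)
  obtain e where e: "e > 0" "ball z e \<subseteq> S" using S openE by blast
  have psi_ge: "\<psi> t \<ge> \<psi> 0" if "0 < t" "t * norm v < e" for t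
  proof -
    have "z + t *\<^sub>R v \<in> S" using e that by (auto simp: dist_norm intro!: subsetD[OF e(2)])
    from mono[OF this S(2)] have "0 \<le> (g (z + t *\<^sub>R v) - g z) \<bullet> (t *\<^sub>R v)" by simp
    hence "0 \<le> t * ((g (z + t *\<^sub>R v) - g z) \<bullet> v)" by simp
    hence "0 \<le> (g (z + t *\<^sub>R v) - g z) \<bullet> v" using that by (simp add: zero_le_mult_iff)
    thus ?thesis unfolding \<psi>_def by (simp add: inner_diff_left)
  qed
  show "0 \<le> v \<bullet> (H *v v)"
  proof (rule ccontr)
    assume "\<not> 0 \<le> v \<bullet> (H *v v)"
    hence "(H *v v) \<bullet> v < 0" by (simp add: inner_commute)
    from DERIV_neg_dec_right[OF dpsi this] obtain d where d: "d > 0"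
      "\<forall>h>0. h < d \<longrightarrow> \<psi> 0 > \<psi> (0 + h)" by blast
    define t where "t = min (d/2) (e / (2 * (norm v + 1)))"
    have t0: "t > 0" proof -
      have "2 * (norm v + 1) > 0" by (simp add: add_nonneg_pos)
      hence "e / (2 * (norm v + 1)) > 0" using e by simp
      thus ?thesis using d by (simp add: t_def)
    qed
    have "t < d" using d by (simp add: t_def)
    have "t * norm v < e"
    proof -
      have "t * norm v \<le> (e / (2 * (norm v + 1))) * norm v"
        by (rule mult_right_mono) (auto simp: t_def)
      also have "\<dots> = e * (norm v / (2 * (norm v + 1)))" by simp
      also have "\<dots> < e * 1"
      proof (rule mult_strict_left_mono)
        have n0: "0 \<le> norm v" by simp
        have "norm v < 2 * norm v + 2" using n0 by linarith
        hence "norm v < 2 * (norm v + 1)" by (simp add: algebra_simps)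
        thus "norm v / (2 * (norm v + 1)) < 1" by (simp add: divide_less_eq add_nonneg_pos)
      qed (use e in auto)
      finally show ?thesis by simp
    qed
    with psi_ge t0 have "\<psi> t \<ge> \<psi> 0" by blast
    moreover have "\<psi> 0 > \<psi> t" using d(2) t0 \<open>t < d\<close> by auto
    ultimately show False by simp
  qed
qed


definition SS :: "real^'v::finite \<Rightarrow> real" where "SS x = (\<Sum>b\<in>UNIV. exp (x $ b))"

lemma SS_pos: "SS x > 0"
  unfolding SS_def by (intro sum_pos) auto

lemma softmax_SS: "softmax x i = exp (x $ i) / SS x"
  by (simp add: softmax_def SS_def)

lemma softmax_pos: "softmax x i > 0"
  unfolding softmax_SS by (intro divide_pos_pos SS_pos) auto

lemma softmax_sum: "(\<Sum>j\<in>UNIV. softmax x j) = 1"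
  using SS_pos[of x] by (simp add: softmax_SS flip: sum_divide_distrib) (simp add: SS_def)

lemma d_coord: "((\<lambda>x::real^'v. x $ i) has_derivative (\<lambda>h. h $ i)) F"
  by (rule bounded_linear_imp_has_derivative) (rule bounded_linear_vec_nth)

lemma d_SS: "(SS has_derivative (\<lambda>h. \<Sum>b\<in>UNIV. h $ b * exp (x $ b))) (at x)"
  unfolding SS_def[abs_def]
  by (intro has_derivative_sum has_derivative_exp d_coord)

lemma d_softmax:
  "((\<lambda>x. softmax x i) has_derivative
     (\<lambda>h. softmax x i * (h $ i - (\<Sum>j\<in>UNIV. softmax x j * h $ j)))) (at x)"
proof -
  have "((\<lambda>x. exp (x $ i) / SS x) has_derivative
     (\<lambda>h. - exp (x $ i) * (inverse (SS x) * (\<Sum>b\<in>UNIV. h $ b * exp (x $ b)) * inverse (SS x))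
          + (h $ i * exp (x $ i)) / SS x)) (at x)"
    by (intro has_derivative_divide has_derivative_exp d_coord d_SS) (use SS_pos[of x] in simp)
  thus ?thesis
    unfolding softmax_SS[abs_def]
    apply (rule has_derivative_eq_rhs)
    using SS_pos[of x]
    by (auto simp: fun_eq_iff softmax_SS field_simps sum_distrib_left sum_divide_distrib power2_eq_square sum_negf)
qed

lemma sft_eq: "sft_loss a x = ln (SS x) - x $ a"
  using SS_pos[of x] by (simp add: sft_loss_def softmax_SS ln_div)

lemma lse_convex: "convex_on UNIV (\<lambda>x::real^'v. ln (SS x))"
proof (rule convex_onI)
  fix t :: real and x y :: "real^'v" assume t: "0 < t" "t < 1"
  define A where "A = SS x"  define B where "B = SS y"
  have A: "A > 0" and B: "B > 0" using SS_pos by (auto simp: A_def B_def)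
  define K where "K = exp ((1 - t) * ln A + t * ln B)"
  have K: "K > 0" by (simp add: K_def)
  have pt: "exp ((1 - t) * x $ i + t * y $ i)
      \<le> K * ((1 - t) * (exp (x $ i) / A) + t * (exp (y $ i) / B))" for i
  proof -
    have "exp ((1 - t) * (x $ i - ln A) + t * (y $ i - ln B))
        \<le> (1 - t) * exp (x $ i - ln A) + t * exp (y $ i - ln B)"
      using convex_onD[OF exp_convex, of t "x $ i - ln A" "y $ i - ln B"] t by simp
    moreover have "exp ((1 - t) * x $ i + t * y $ i) = K * exp ((1 - t) * (x $ i - ln A) + t * (y $ i - ln B))"
      by (simp add: K_def flip: exp_add) (simp add: algebra_simps)
    ultimately show ?thesis using K A B by (simp add: exp_diff)
  qed
  have "SS ((1 - t) *\<^sub>R x + t *\<^sub>R y) = (\<Sum>i\<in>UNIV. exp ((1 - t) * x $ i + t * y $ i))"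
    by (simp add: SS_def)
  also have "\<dots> \<le> (\<Sum>i\<in>UNIV. K * ((1 - t) * (exp (x $ i) / A) + t * (exp (y $ i) / B)))"
    by (rule sum_mono) (rule pt)
  also have "\<dots> = K * ((1 - t) * ((\<Sum>i\<in>UNIV. exp (x $ i)) / A) + t * ((\<Sum>i\<in>UNIV. exp (y $ i)) / B))"
    by (simp add: sum.distrib flip: sum_distrib_left sum_divide_distrib)
  also have "\<dots> = K" using A B by (simp add: A_def B_def SS_def)
  finally have le: "SS ((1 - t) *\<^sub>R x + t *\<^sub>R y) \<le> K" .
  have "ln (SS ((1 - t) *\<^sub>R x + t *\<^sub>R y)) \<le> ln K"
    using le SS_pos K by (subst ln_le_cancel_iff) auto
  thus "ln (SS ((1 - t) *\<^sub>R x + t *\<^sub>R y)) \<le> (1 - t) * ln (SS x) + t * ln (SS y)"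
    by (simp add: K_def A_def B_def)
qed simp

lemma sft_convex:
  fixes a :: "'v::finite"
  shows "convex_on UNIV (sft_loss a)"
proof -
  have "convex_on UNIV (\<lambda>x::real^'v. ln (SS x) + (- x $ a))"
  proof (rule convex_on_add[OF lse_convex])
    show "convex_on UNIV (\<lambda>x::real^'v. - x $ a)"
      by (rule convex_onI) (auto simp: algebra_simps)
  qed
  thus ?thesis by (simp add: sft_eq[abs_def])
qed


definition PP :: "real^'v::finite \<Rightarrow> real^'v" where
  "PP x = (\<Sum>j\<in>UNIV. softmax x j *\<^sub>R axis j 1)"

definition Dp :: "real^'v::finite \<Rightarrow> 'v \<Rightarrow> real^'v \<Rightarrow> real" where
  "Dp x i h = softmax x i * (h $ i - (\<Sum>j\<in>UNIV. softmax x j * h $ j))"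

lemma inner_axis_sum: "(\<Sum>j\<in>UNIV. f j *\<^sub>R axis j (1::real)) \<bullet> h = (\<Sum>j\<in>UNIV. f j * h $ j)"
  by (simp add: inner_sum_left inner_axis')

lemma d_softmax': "((\<lambda>x. softmax x i) has_derivative Dp x i) (at x)"
  unfolding Dp_def[abs_def] by (rule d_softmax)

lemma d_PP: "(PP has_derivative (\<lambda>h. \<Sum>j\<in>UNIV. Dp x j h *\<^sub>R axis j 1)) (at x)"
  unfolding PP_def[abs_def]
  by (intro has_derivative_sum has_derivative_scaleR_left d_softmax')

lemma hess_matrix:
  fixes g :: "real^'n \<Rightarrow> real^'n"
  assumes "(g has_derivative D) (at z)"
  shows "(g has_derivative (\<lambda>h. matrix D *v h)) (at z)"
proof -
  have "linear D" using has_derivative_linear[OF assms] .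
  hence l: "Vector_Spaces.linear (*s) (*s) D" by (simp add: linear_matrix_vector_mul_eq linear_linear)
  show ?thesis using assms by (rule has_derivative_eq_rhs) (simp add: fun_eq_iff matrix_works[OF l])
qed

lemma sft_grad:
  "(sft_loss a has_derivative (\<lambda>h. (PP x - axis a 1) \<bullet> h)) (at x)"
proof -
  have "((\<lambda>x. ln (SS x) - x $ a) has_derivative
      (\<lambda>h. (\<Sum>b\<in>UNIV. h $ b * exp (x $ b)) * inverse (SS x) - h $ a)) (at x)"
    by (intro has_derivative_diff has_derivative_ln d_SS d_coord SS_pos)
  thus ?thesis
    unfolding sft_eq[abs_def]
    apply (rule has_derivative_eq_rhs)
  proof (rule ext)
    fix h :: "real^'a"
    have "(PP x - axis a 1) \<bullet> h = (\<Sum>j\<in>UNIV. softmax x j * h $ j) - h $ a"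
      by (simp add: PP_def inner_diff_left inner_axis_sum inner_axis')
    also have "(\<Sum>j\<in>UNIV. softmax x j * h $ j) = (\<Sum>b\<in>UNIV. h $ b * exp (x $ b)) * inverse (SS x)"
      by (simp add: softmax_SS divide_inverse sum_distrib_left mult_ac)
    finally show "(\<Sum>b\<in>UNIV. h $ b * exp (x $ b)) * inverse (SS x) - h $ a = (PP x - axis a 1) \<bullet> h" by simp
  qed
qed

lemma sft_hess: "\<exists>H. has_hessian (sft_loss a) H z"
proof -
  have "((\<lambda>x. PP x - axis a 1) has_derivative (\<lambda>h. (\<Sum>j\<in>UNIV. Dp z j h *\<^sub>R axis j 1) - 0)) (at z)"
    by (intro has_derivative_diff d_PP has_derivative_const)
  note hm = hess_matrix[OF this]
  have "has_hessian (sft_loss a) (matrix (\<lambda>h. (\<Sum>j\<in>UNIV. Dp z j h *\<^sub>R axis j 1) - 0)) z"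
    unfolding has_hessian_def
    apply (rule exI[where x=UNIV], rule exI[where x="\<lambda>x. PP x - axis a 1"])
    apply (intro conjI ballI)
       apply simp
      apply simp
     apply (rule sft_grad)
    apply (rule hm)
    done
  thus ?thesis ..
qed



lemma sum_axis_e: "(\<Sum>j\<in>UNIV. f j * axis a (1::real) $ j) = f a"
  by (simp add: axis_def if_distrib sum.delta cong: if_cong)

lemma gen_nonpsd:
  fixes f :: "real^'v::finite \<Rightarrow> real"
  assumes U: "open U" "z \<in> U" and fe: "\<And>x. x \<in> U \<Longrightarrow> f x = c * softmax x a"
    and neg: "c * (1 - 2 * softmax z a) < 0" and p1: "softmax z a < 1"
  shows "\<exists>H. has_hessian f H z \<and> \<not> psd H"
proof -
  define gp where "gp = (\<lambda>x. (c * softmax x a) *\<^sub>R (axis a 1 - PP x))"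
  define D where "D = (\<lambda>h. (c * softmax z a) *\<^sub>R (0 - (\<Sum>j\<in>UNIV. Dp z j h *\<^sub>R axis j 1))
       + (c * Dp z a h) *\<^sub>R (axis a 1 - PP z))"
  have dg: "(gp has_derivative D) (at z)"
    unfolding gp_def D_def
    by (intro has_derivative_scaleR has_derivative_mult_right d_softmax' has_derivative_diff
        has_derivative_const d_PP)
  have df: "(f has_derivative (\<lambda>h. gp x \<bullet> h)) (at x)" if "x \<in> U" for x
  proof -
    have "((\<lambda>x. c * softmax x a) has_derivative (\<lambda>h. c * Dp x a h)) (at x)"
      by (intro has_derivative_mult_right d_softmax')
    hence "((\<lambda>x. c * softmax x a) has_derivative (\<lambda>h. gp x \<bullet> h)) (at x)"
      by (rule has_derivative_eq_rhs)
        (simp add: fun_eq_iff gp_def Dp_def PP_def inner_diff_left inner_axis_sum inner_axis' algebra_simps)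
    thus ?thesis
      by (rule has_derivative_transform_within_open[OF _ U(1) that]) (simp add: fe)
  qed
  have hh: "has_hessian f (matrix D) z"
    unfolding has_hessian_def
    apply (rule exI[where x=U], rule exI[where x=gp])
    apply (intro conjI ballI)
       apply (rule U(1))
      apply (rule U(2))
     apply (erule df)
    apply (rule hess_matrix[OF dg])
    done
  have lin: "linear D" using has_derivative_linear[OF dg] .
  hence l: "Vector_Spaces.linear (*s) (*s) D" by (simp add: linear_matrix_vector_mul_eq linear_linear)
  define e :: "real^'v" where "e = axis a 1"
  define p where "p = softmax z a"
  have Dpe: "Dp z j e = softmax z j * (e $ j - p)" for j
    by (simp add: Dp_def e_def p_def sum_axis_e)
  have Dpa: "Dp z a (axis a 1) = softmax z a * (1 - softmax z a)"
    using Dpe[of a] by (simp add: e_def p_def)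
  have "e \<bullet> (matrix D *v e) = D e \<bullet> e"
    by (simp add: matrix_works[OF l] inner_commute)
  also have "\<dots> = (c * p) * (- (p * (1 - p))) + (c * (p * (1 - p))) * (1 - p)"
    by (simp add: D_def inner_add_left inner_diff_left inner_axis_sum Dpe e_def p_def PP_def
        sum_axis_e inner_axis_axis Dpa)
  also have "\<dots> = c * (1 - 2 * p) * (p * (1 - p))" by (simp add: algebra_simps)
  also have "\<dots> < 0"
  proof (rule mult_neg_pos)
    show "c * (1 - 2 * p) < 0" using neg by (simp add: p_def)
    show "0 < p * (1 - p)" using p1 softmax_pos[of z a] by (simp add: p_def)
  qed
  finally have "\<not> psd (matrix D)" unfolding psd_def by (metis not_le)
  with hh show ?thesis by blast
qed



lemma exists_q:
  fixes a :: "'v::finite"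
  assumes card: "CARD('v) \<ge> 2" and q: "0 < q" "q < 1"
  shows "\<exists>z::real^'v. softmax z a = q"
proof -
  define m where "m = real (CARD('v) - 1)"
  have m: "m \<ge> 1" using card by (simp add: m_def)
  define w where "w = q * m / (1 - q)"
  have w: "w > 0" using q m by (simp add: w_def)
  define z :: "real^'v" where "z = (ln w) *\<^sub>R axis a 1"
  have za: "z $ a = ln w" by (simp add: z_def)
  have zj: "z $ j = 0" if "j \<noteq> a" for j using that by (simp add: z_def axis_def)
  have "SS z = exp (z $ a) + (\<Sum>j\<in>UNIV - {a}. exp (z $ j))"
    unfolding SS_def by (simp add: sum.remove)
  also have "(\<Sum>j\<in>UNIV - {a}. exp (z $ j)) = (\<Sum>j\<in>UNIV - {a}. 1)"
    by (rule sum.cong) (auto simp: zj)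
  also have "\<dots> = m" by (simp add: m_def card_Diff_singleton)
  finally have S: "SS z = w + m" using w za by simp
  have "softmax z a = w / (w + m)" by (simp add: softmax_SS S za w)
  also have "\<dots> = q" using q m by (simp add: w_def field_simps)
  finally show ?thesis by blast
qed

lemma softmax_cont: "continuous_on UNIV (\<lambda>x. softmax x a)"
  by (rule continuous_at_imp_continuous_on) (auto intro: has_derivative_continuous[OF d_softmax])

lemma ppo_eq:
  assumes "softmax x a / p0 * A \<le> clip (softmax x a / p0) (1 - eps) (1 + eps) * A"
  shows "ppo_loss a p0 A eps x = (- A / p0) * softmax x a"
  using assms by (simp add: ppo_loss_def Let_def min_def)

lemma ppo_part:
  fixes a :: "'v::finite"
  assumes card: "CARD('v) \<ge> 2" and h: "0 < p0" "p0 \<le> 1" "A \<noteq> 0" "0 < eps" "eps < 1"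
  shows "\<exists>z H. has_hessian (ppo_loss a p0 A eps) H z \<and> \<not> psd H"
proof (cases "A > 0")
  case True
  define q where "q = p0 / 4"
  have q: "0 < q" "q < 1" using h by (auto simp: q_def)
  obtain z :: "real^'v" where z: "softmax z a = q" using exists_q[OF card q] by blast
  define U where "U = {x::real^'v. softmax x a < p0}"
  have oU: "open U" unfolding U_def by (intro open_Collect_less softmax_cont continuous_on_const)
  have zU: "z \<in> U" using z h by (simp add: U_def q_def)
  have fe: "ppo_loss a p0 A eps x = (- A / p0) * softmax x a" if "x \<in> U" for x
  proof (rule ppo_eq)
    have r: "softmax x a / p0 < 1" using that h by (simp add: U_def divide_less_eq)
    have r1: "softmax x a / p0 \<le> 1 + eps" using r h by linarith
    have "softmax x a / p0 \<le> clip (softmax x a / p0) (1 - eps) (1 + eps)"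
      using r1 unfolding clip_def by linarith
    thus "softmax x a / p0 * A \<le> clip (softmax x a / p0) (1 - eps) (1 + eps) * A"
      using True by (metis mult_right_mono less_imp_le)
  qed
  have neg: "(- A / p0) * (1 - 2 * softmax z a) < 0"
    using True h z by (simp add: q_def mult_neg_pos divide_neg_pos)
  show ?thesis using gen_nonpsd[OF oU zU fe neg] z q by auto
next
  case False
  hence An: "A < 0" using h by simp
  define q where "q = (3 + p0 * (1 - eps)) / 4"
  have pe1: "0 < p0 * (1 - eps)" using h by simp
  have "0 < p0 * eps" using h by simp
  moreover have "p0 * (1 - eps) = p0 - p0 * eps" by (simp add: algebra_simps)
  ultimately have pe2: "p0 * (1 - eps) < 1" using h by linarith
  note pe = pe1 pe2
  have q: "0 < q" "q < 1" using pe by (auto simp: q_def)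
  obtain z :: "real^'v" where z: "softmax z a = q" using exists_q[OF card q] by blast
  define U where "U = {x::real^'v. p0 * (1 - eps) < softmax x a}"
  have oU: "open U" unfolding U_def by (intro open_Collect_less softmax_cont continuous_on_const)
  have zU: "z \<in> U" using z pe by (simp add: U_def q_def)
  have fe: "ppo_loss a p0 A eps x = (- A / p0) * softmax x a" if "x \<in> U" for x
  proof (rule ppo_eq)
    have r: "1 - eps < softmax x a / p0" using that h by (simp add: U_def less_divide_eq mult.commute)
    have "clip (softmax x a / p0) (1 - eps) (1 + eps) \<le> softmax x a / p0"
      using r unfolding clip_def by linarith
    thus "softmax x a / p0 * A \<le> clip (softmax x a / p0) (1 - eps) (1 + eps) * A"
      using An by (metis mult_right_mono_neg less_imp_le)
  qed
  have "1 - 2 * q < 0" using pe by (simp add: q_def)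
  hence "0 < A * (1 - 2 * q)" using An by (simp add: mult_neg_neg)
  hence "0 < A * (1 - 2 * q) / p0" using h by simp
  hence neg: "(- A / p0) * (1 - 2 * softmax z a) < 0"
    using z by simp
  show ?thesis using gen_nonpsd[OF oU zU fe neg] z q by auto
qed

theorem lemma4p5:
  fixes a :: "'v::finite"
  assumes "CARD('v) \<ge> 2"
  shows "(convex_on UNIV (sft_loss a)
          \<and> (\<forall>z. \<exists>H. has_hessian (sft_loss a) H z)
          \<and> (\<forall>z H. has_hessian (sft_loss a) H z \<longrightarrow> psd H))
       \<and> (\<forall>p0 A eps. 0 < p0 \<and> p0 \<le> 1 \<and> A \<noteq> 0 \<and> 0 < eps \<and> eps < 1 \<longrightarrow>
            \<not> convex_on UNIV (ppo_loss a p0 A eps)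
            \<and> (\<exists>z H. has_hessian (ppo_loss a p0 A eps) H z \<and> \<not> psd H))"
proof (intro conjI allI impI)
  show "convex_on UNIV (sft_loss a)" by (rule sft_convex)
  show "\<exists>H. has_hessian (sft_loss a) H z" for z by (rule sft_hess)
  show "psd H" if "has_hessian (sft_loss a) H z" for z H
    by (rule convex_hessian_psd[OF sft_convex that])
  fix p0 A eps :: real
  assume h: "0 < p0 \<and> p0 \<le> 1 \<and> A \<noteq> 0 \<and> 0 < eps \<and> eps < 1"
  have ex: "\<exists>z H. has_hessian (ppo_loss a p0 A eps) H z \<and> \<not> psd H"
    using ppo_part[OF assms] h by blast
  thus "\<exists>z H. has_hessian (ppo_loss a p0 A eps) H z \<and> \<not> psd H" .
  show "\<not> convex_on UNIV (ppo_loss a p0 A eps)"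
    using ex convex_hessian_psd by blast
qed

end
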